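(* Let $(\Omega,\mathcal F)$ be a measurable space with $\Sigma\neq\emptyset$, $\nu$ a finite measure, and $\mu$ a finite measure with $\mu\ll\nu$. Let $F_\mu(y)=\nu(\{\omega:\frac{d\mu}{d\nu}(\omega)\le y\})$ and $v_\mu(A)=\int_0^\infty\min(\nu(\Omega)-F_\mu(z),\nu(A))\,dz$. For a non-negative measurable $f:\Omega\to[0,\infty)$ let $F_f(z)=\nu(\{\omega:f(\omega)\le z\})$ ($z\ge0$). Then $$v_\mu(f)=\int_0^{\nu(\Omega)}F_\mu^{-1}(\beta)\,F_f^{-1}(\beta)\,d\beta,$$ where $v_\mu(f)=\int_0^\infty v_\mu(\{\omega:f(\omega)>z\})\,dz$ and, for $F\in\{F_\mu,F_f\}$, $F^{-1}(\beta)=\inf\{z\ge0:F(z)>\beta\}$.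
   Context: $\Sigma$ denotes the set of all classes $\mathcal I\subset\mathcal F$ that are chains (totally ordered by inclusion), contain $\emptyset$ and $\Omega$, and generate $\mathcal F$ as a $\sigma$-algebra. $\frac{d\mu}{d\nu}$ is the non-negative Radon–Nikodym derivative. *)

theory Defs
  imports "HOL-Probability.Probability"
begin

definition chain_generators :: "'a measure \<Rightarrow> 'a set set set" where
  "chain_generators M = {I. I \<subseteq> sets M \<and> (\<forall>A\<in>I. \<forall>B\<in>I. A \<subseteq> B \<or> B \<subseteq> A)
      \<and> {} \<in> I \<and> space M \<in> I \<and> sigma_sets (space M) I = sets M}"

definition distF_rn :: "'a measure \<Rightarrow> 'a measure \<Rightarrow> real \<Rightarrow> real" where
  "distF_rn \<nu> \<mu> y = measure \<nu> {\<omega> \<in> space \<nu>. RN_deriv \<nu> \<mu> \<omega> \<le> ennreal y}"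

definition distF_fun :: "'a measure \<Rightarrow> ('a \<Rightarrow> real) \<Rightarrow> real \<Rightarrow> real" where
  "distF_fun \<nu> f z = measure \<nu> {\<omega> \<in> space \<nu>. f \<omega> \<le> z}"

text \<open>Generalised inverse F^{-1}(beta) = inf {z >= 0 : F(z) > beta}, taken in [0,infinity] (inf of empty set = infinity).\<close>
definition qinv :: "(real \<Rightarrow> real) \<Rightarrow> real \<Rightarrow> ennreal" where
  "qinv F \<beta> = Inf (ennreal ` {z. 0 \<le> z \<and> F z > \<beta>})"

definition v_set :: "'a measure \<Rightarrow> 'a measure \<Rightarrow> 'a set \<Rightarrow> ennreal" where
  "v_set \<nu> \<mu> A = (\<integral>\<^sup>+ z. indicator {0..} z *
      ennreal (min (measure \<nu> (space \<nu>) - distF_rn \<nu> \<mu> z) (measure \<nu> A)) \<partial>lborel)"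

definition v_fun :: "'a measure \<Rightarrow> 'a measure \<Rightarrow> ('a \<Rightarrow> real) \<Rightarrow> ennreal" where
  "v_fun \<nu> \<mu> f = (\<integral>\<^sup>+ z. indicator {0..} z * v_set \<nu> \<mu> {\<omega> \<in> space \<nu>. f \<omega> > z} \<partial>lborel)"

end

theory Submission imports Defs begin

lemma mono_ennreal_meas:
  fixes G :: "real \<Rightarrow> ennreal" assumes "mono G"
  shows "G \<in> borel_measurable borel"
proof (rule borel_measurableI_greater)
  fix y
  have "is_interval {x. y < G x}"
    unfolding is_interval_1 using assms by (auto simp: mono_def intro: less_le_trans)
  then show "{x \<in> space borel. y < G x} \<in> sets borel"
    using real_interval_borel_measurable by simp
qed

lemma qinv_mono: "mono (qinv F)"
  unfolding mono_def qinv_def by (auto intro!: Inf_superset_mono)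

lemma qinv_meas[measurable]: "qinv F \<in> borel_measurable borel"
  by (rule mono_ennreal_meas[OF qinv_mono])

lemma emeasure_lborel_Ici0: "emeasure lborel {0::real..} = top"
proof -
  have "of_nat n \<le> emeasure lborel {0::real..}" for n
    using emeasure_mono[of "{0..real n}" "{0::real..}" lborel] by (auto simp: ennreal_of_nat_eq_real_of_nat)
  hence "(SUP n. of_nat n :: ennreal) \<le> emeasure lborel {0::real..}" by (intro SUP_least) auto
  thus ?thesis by (simp add: ennreal_SUP_of_nat_eq_top top_unique)
qed

lemma emeasure_lt_ennreal:
  "emeasure lborel {t. 0 \<le> t \<and> ennreal t < x} = x"
proof (cases x)
  case (real r)
  then have "{t. 0 \<le> t \<and> ennreal t < x} = {0..<r}"
    by (auto simp: ennreal_less_iff)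
  then show ?thesis using real by simp
next
  case top
  then have "{t. 0 \<le> t \<and> ennreal t < x} = {0..}" by auto
  then show ?thesis using top by (simp add: emeasure_lborel_Ici0)
qed

lemma qinv_measure:
  fixes F :: "real \<Rightarrow> real" assumes mF: "mono F"
  shows "emeasure lborel {z. 0 \<le> z \<and> F z \<le> \<beta>} = qinv F \<beta>"
proof -
  define T where "T = {z. 0 \<le> z \<and> \<beta> < F z}"
  have Fm: "F \<in> borel_measurable borel" using borel_measurable_mono[OF mF] .
  have Sm: "{z. 0 \<le> z \<and> F z \<le> \<beta>} \<in> sets lborel"
  proof -
    have "{z. 0 \<le> z \<and> F z \<le> \<beta>} = {z \<in> space borel. 0 \<le> z \<and> F z \<le> \<beta>}" by simp
    also have "\<dots> \<in> sets borel" using Fm by measurable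
    finally show ?thesis by simp
  qed
  show ?thesis
  proof (cases "T = {}")
    case True
    then have "{z. 0 \<le> z \<and> F z \<le> \<beta>} = {0..}" by (auto simp: T_def)
    moreover have "qinv F \<beta> = top" using True unfolding qinv_def T_def by simp
    ultimately show ?thesis by (simp add: emeasure_lborel_Ici0)
  next
    case False
    define w where "w = Inf T"
    have bdd: "bdd_below T" unfolding T_def by (rule bdd_belowI[of _ 0]) auto
    have wle: "w \<le> z" if "z \<in> T" for z using cInf_lower[OF that bdd] w_def by simp
    have w0: "0 \<le> w" unfolding w_def using False by (auto intro!: cInf_greatest simp: T_def)
    have sub1: "{0..<w} \<subseteq> {z. 0 \<le> z \<and> F z \<le> \<beta>}"
    proof
      fix z assume "z \<in> {0..<w}"
      then have "z \<notin> T" using wle by force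
      then show "z \<in> {z. 0 \<le> z \<and> F z \<le> \<beta>}" using \<open>z \<in> {0..<w}\<close> by (auto simp: T_def)
    qed
    have sub2: "{z. 0 \<le> z \<and> F z \<le> \<beta>} \<subseteq> {0..w}"
    proof
      fix z assume z: "z \<in> {z. 0 \<le> z \<and> F z \<le> \<beta>}"
      show "z \<in> {0..w}"
      proof (rule ccontr)
        assume "z \<notin> {0..w}"
        then have "w < z" using z by auto
        then obtain z' where "z' \<in> T" "z' < z" using cInf_less_iff[OF False bdd] w_def by auto
        then have "\<beta> < F z'" "F z' \<le> F z" using mF by (auto simp: T_def mono_def)
        then show False using z by auto
      qed
    qed
    have "emeasure lborel {z. 0 \<le> z \<and> F z \<le> \<beta>} = ennreal w"
    proof (rule antisym)
      show "emeasure lborel {z. 0 \<le> z \<and> F z \<le> \<beta>} \<le> ennreal w"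
        using emeasure_mono[OF sub2, of lborel] w0 by simp
      show "ennreal w \<le> emeasure lborel {z. 0 \<le> z \<and> F z \<le> \<beta>}"
        using emeasure_mono[OF sub1 Sm] w0 by simp
    qed
    moreover have "qinv F \<beta> = ennreal w"
    proof (rule antisym)
      show "qinv F \<beta> \<le> ennreal w"
        unfolding qinv_def
      proof (rule ennreal_le_epsilon)
        fix e :: real assume "0 < e"
        then have "w < w + e" by simp
        then obtain z where z: "z \<in> T" "z < w + e" using cInf_less_iff[OF False bdd, of "w+e"] unfolding w_def by auto
        then have "Inf (ennreal ` {z. 0 \<le> z \<and> F z > \<beta>}) \<le> ennreal z"
          by (intro Inf_lower) (auto simp: T_def)
        also have "\<dots> \<le> ennreal w + ennreal e"
          using z \<open>0 < e\<close> w0 by (simp flip: ennreal_plus add: ennreal_leI)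
        finally show "Inf (ennreal ` {z. 0 \<le> z \<and> F z > \<beta>}) \<le> ennreal w + ennreal e" .
      qed
      show "ennreal w \<le> qinv F \<beta>"
        unfolding qinv_def using wle by (auto intro!: Inf_greatest ennreal_leI simp: T_def)
    qed
    ultimately show ?thesis by simp
  qed
qed


lemma distF_rn_mono: assumes "finite_measure \<nu>" shows "mono (distF_rn \<nu> \<mu>)"
  unfolding mono_def distF_rn_def
  by (auto intro!: finite_measure.finite_measure_mono[OF assms] intro: order_trans ennreal_leI)

lemma distF_fun_mono: assumes "finite_measure \<nu>" "f \<in> borel_measurable \<nu>"
  shows "mono (distF_fun \<nu> f)"
  unfolding mono_def distF_fun_def using assms(2)
  by (auto intro!: finite_measure.finite_measure_mono[OF assms(1)])

lemma distF_rn_rc: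
  assumes fin: "finite_measure \<nu>" and t: "0 \<le> t" and lt: "distF_rn \<nu> \<mu> t < \<beta>"
  shows "\<exists>\<delta>>0. distF_rn \<nu> \<mu> (t + \<delta>) < \<beta>"
proof -
  define A where "A n = {\<omega> \<in> space \<nu>. RN_deriv \<nu> \<mu> \<omega> \<le> ennreal (t + 1 / Suc n)}" for n
  have rA: "range A \<subseteq> sets \<nu>" unfolding A_def by auto
  have dA: "decseq A" unfolding decseq_def
  proof (intro allI impI)
    fix m n :: nat assume "m \<le> n"
    then have "1 / real (Suc n) \<le> 1 / real (Suc m)" by (simp add: frac_le)
    then have "ennreal (t + 1 / Suc n) \<le> ennreal (t + 1 / Suc m)" by (intro ennreal_leI) simp
    then show "A n \<subseteq> A m" unfolding A_def by (auto intro: order_trans)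
  qed
  have IA: "(\<Inter>i. A i) = {\<omega> \<in> space \<nu>. RN_deriv \<nu> \<mu> \<omega> \<le> ennreal t}"
  proof
    show "{\<omega> \<in> space \<nu>. RN_deriv \<nu> \<mu> \<omega> \<le> ennreal t} \<subseteq> (\<Inter>i. A i)"
      unfolding A_def using t by (auto intro: order_trans ennreal_leI)
    show "(\<Inter>i. A i) \<subseteq> {\<omega> \<in> space \<nu>. RN_deriv \<nu> \<mu> \<omega> \<le> ennreal t}"
    proof
      fix \<omega> assume w: "\<omega> \<in> (\<Inter>i. A i)"
      have "RN_deriv \<nu> \<mu> \<omega> \<le> ennreal t"
      proof (rule ennreal_le_epsilon)
        fix e :: real assume "0 < e"
        then obtain n where n: "1 / real (Suc n) < e"
          using nat_approx_posE by blast
        have "RN_deriv \<nu> \<mu> \<omega> \<le> ennreal (t + 1 / Suc n)" using w unfolding A_def by auto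
        also have "\<dots> \<le> ennreal t + ennreal e" using n t \<open>0 < e\<close>
          by (simp flip: ennreal_plus add: ennreal_leI)
        finally show "RN_deriv \<nu> \<mu> \<omega> \<le> ennreal t + ennreal e" .
      qed
      then show "\<omega> \<in> {\<omega> \<in> space \<nu>. RN_deriv \<nu> \<mu> \<omega> \<le> ennreal t}" using w unfolding A_def by auto
    qed
  qed
  have "(\<lambda>n. measure \<nu> (A n)) \<longlonglongrightarrow> distF_rn \<nu> \<mu> t"
    using finite_measure.finite_Lim_measure_decseq[OF fin rA dA] IA unfolding distF_rn_def by simp
  then have "eventually (\<lambda>n. measure \<nu> (A n) < \<beta>) sequentially"
    using lt order_tendstoD(2) by blast
  then obtain n where "measure \<nu> (A n) < \<beta>" by (auto simp: eventually_sequentially)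
  then show ?thesis unfolding A_def distF_rn_def
    by (intro exI[of _ "1 / Suc n"]) auto
qed

lemma lemA:
  assumes fin: "finite_measure \<nu>" and t: "0 \<le> t" and c: "0 \<le> c" "c \<le> measure \<nu> (space \<nu>)"
  shows "emeasure lborel ({measure \<nu> (space \<nu>) - c..measure \<nu> (space \<nu>)} \<inter>
      {\<beta>. ennreal t < qinv (distF_rn \<nu> \<mu>) \<beta>})
    = ennreal (min (measure \<nu> (space \<nu>) - distF_rn \<nu> \<mu> t) c)"
proof -
  define N where "N = measure \<nu> (space \<nu>)"
  define F where "F = distF_rn \<nu> \<mu>"
  have mF: "mono F" unfolding F_def using distF_rn_mono[OF fin] .
  have F0: "0 \<le> F t" unfolding F_def distF_rn_def by simp
  have FN: "F t \<le> N" unfolding F_def distF_rn_def N_def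
    by (intro finite_measure.bounded_measure[OF fin])
  have i1: "ennreal t < qinv F \<beta>" if lt: "F t < \<beta>" for \<beta>
  proof -
    obtain \<delta> where d: "\<delta> > 0" "F (t + \<delta>) < \<beta>"
      using distF_rn_rc[OF fin t lt[unfolded F_def]] unfolding F_def by auto
    have "ennreal (t + \<delta>) \<le> qinv F \<beta>"
      unfolding qinv_def
    proof (rule Inf_greatest)
      fix x assume "x \<in> ennreal ` {z. 0 \<le> z \<and> \<beta> < F z}"
      then obtain z where z: "x = ennreal z" "0 \<le> z" "\<beta> < F z" by auto
      have "t + \<delta> \<le> z"
      proof (rule ccontr)
        assume "\<not> t + \<delta> \<le> z"
        then have "F z \<le> F (t + \<delta>)" using mF by (auto simp: mono_def)
        then show False using z d by auto
      qed
      then show "ennreal (t + \<delta>) \<le> x" using z by (simp add: ennreal_leI)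
    qed
    moreover have "ennreal t < ennreal (t + \<delta>)" using d t by (simp add: ennreal_less_iff)
    ultimately show ?thesis by (meson less_le_trans)
  qed
  have i2: "F t \<le> \<beta>" if "ennreal t < qinv F \<beta>" for \<beta>
  proof (rule ccontr)
    assume "\<not> F t \<le> \<beta>"
    then have "qinv F \<beta> \<le> ennreal t" unfolding qinv_def using t by (auto intro!: Inf_lower)
    then show False using that by simp
  qed
  define m where "m = max (N - c) (F t)"
  have m: "m \<le> N" using c FN unfolding m_def N_def by auto
  have S: "{N - c..N} \<inter> {\<beta>. ennreal t < qinv F \<beta>} \<in> sets lborel"
  proof -
    have "{\<beta>. ennreal t < qinv F \<beta>} = {\<beta> \<in> space borel. ennreal t < qinv F \<beta>}" by simp
    also have "\<dots> \<in> sets borel" by measurable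
    finally show ?thesis by simp
  qed
  have s1: "{m<..N} \<subseteq> {N - c..N} \<inter> {\<beta>. ennreal t < qinv F \<beta>}"
    using i1 unfolding m_def by auto
  have s2: "{N - c..N} \<inter> {\<beta>. ennreal t < qinv F \<beta>} \<subseteq> {m..N}"
    using i2 unfolding m_def by auto
  have "emeasure lborel ({N - c..N} \<inter> {\<beta>. ennreal t < qinv F \<beta>}) = ennreal (N - m)"
  proof (rule antisym)
    show "emeasure lborel ({N - c..N} \<inter> {\<beta>. ennreal t < qinv F \<beta>}) \<le> ennreal (N - m)"
      using emeasure_mono[OF s2, of lborel] m by simp
    show "ennreal (N - m) \<le> emeasure lborel ({N - c..N} \<inter> {\<beta>. ennreal t < qinv F \<beta>})"
      using emeasure_mono[OF s1 S] m by simp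
  qed
  moreover have "N - m = min (N - F t) c" unfolding m_def by auto
  ultimately show ?thesis unfolding N_def F_def by simp
qed


lemma m1: "(\<lambda>(t::real, \<beta>::real). indicator {0..} t * (indicator {a..b} \<beta> * indicator {\<beta>. ennreal t < qinv F \<beta>} \<beta>) :: ennreal)
   \<in> borel_measurable (lborel \<Otimes>\<^sub>M lborel)"
proof -
  have "{p \<in> space (lborel \<Otimes>\<^sub>M lborel). ennreal (fst p) < qinv F (snd p)} \<in> sets (lborel \<Otimes>\<^sub>M lborel)"
    by measurable
  have "(\<lambda>p. indicator {0..} (fst p) * (indicator {a..b} (snd p) * indicator {p. ennreal (fst p) < qinv F (snd p)} p) :: ennreal)
   \<in> borel_measurable (lborel \<Otimes>\<^sub>M lborel)"
    by measurable
  then show ?thesis by (simp add: case_prod_beta indicator_def)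
qed

lemma m2: assumes [measurable]: "H \<in> borel_measurable borel"
  shows "(\<lambda>(z::real, \<beta>::real). indicator {0..} z * (indicator {H z..b} \<beta> * qinv F \<beta>) :: ennreal)
   \<in> borel_measurable (lborel \<Otimes>\<^sub>M lborel)"
proof -
  have "(\<lambda>p. indicator {0..} (fst p) * (indicator {p. H (fst p) \<le> snd p \<and> snd p \<le> b} p * qinv F (snd p)) :: ennreal)
   \<in> borel_measurable (lborel \<Otimes>\<^sub>M lborel)"
    by measurable
  then show ?thesis by (simp add: case_prod_beta indicator_def)
qed


theorem proposition17:
  fixes \<nu> \<mu> :: "'a measure" and f :: "'a \<Rightarrow> real"
  assumes "chain_generators \<nu> \<noteq> {}"
    and "finite_measure \<nu>" and "finite_measure \<mu>"
    and "sets \<mu> = sets \<nu>"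
    and "absolutely_continuous \<nu> \<mu>"
    and "f \<in> borel_measurable \<nu>" and "\<forall>\<omega>\<in>space \<nu>. 0 \<le> f \<omega>"
  shows "v_fun \<nu> \<mu> f =
    (\<integral>\<^sup>+ \<beta>. indicator {0..measure \<nu> (space \<nu>)} \<beta> *
        (qinv (distF_rn \<nu> \<mu>) \<beta> * qinv (distF_fun \<nu> f) \<beta>) \<partial>lborel)"
proof -
  note fin = assms(2)
  note fm[measurable] = assms(6)
  define N where "N = measure \<nu> (space \<nu>)"
  define F1 where "F1 = distF_rn \<nu> \<mu>"
  define F2 where "F2 = distF_fun \<nu> f"
  define G where "G = qinv F1"
  define Q where "Q = qinv F2"
  have F2mono: "mono F2" unfolding F2_def using distF_fun_mono[OF fin fm] .
  have F2m[measurable]: "F2 \<in> borel_measurable borel" using borel_measurable_mono[OF F2mono] .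
  have F20: "0 \<le> F2 z" for z unfolding F2_def distF_fun_def by simp
  have F2N: "F2 z \<le> N" for z unfolding F2_def distF_fun_def N_def
    by (intro finite_measure.bounded_measure[OF fin])
  have mA: "measure \<nu> {\<omega> \<in> space \<nu>. z < f \<omega>} = N - F2 z" for z
  proof -
    have "{\<omega> \<in> space \<nu>. z < f \<omega>} = space \<nu> - {\<omega> \<in> space \<nu>. f \<omega> \<le> z}" by auto
    then show ?thesis unfolding N_def F2_def distF_fun_def
      by (simp add: finite_measure.finite_measure_compl[OF fin])
  qed
  have step1: "v_set \<nu> \<mu> {\<omega> \<in> space \<nu>. z < f \<omega>} = (\<integral>\<^sup>+ \<beta>. indicator {F2 z..N} \<beta> * G \<beta> \<partial>lborel)" for z
  proof -
    have "v_set \<nu> \<mu> {\<omega> \<in> space \<nu>. z < f \<omega>} =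
      (\<integral>\<^sup>+ t. indicator {0..} t * ennreal (min (N - F1 t) (N - F2 z)) \<partial>lborel)"
      unfolding v_set_def mA N_def F1_def ..
    also have "\<dots> = (\<integral>\<^sup>+ t. \<integral>\<^sup>+ \<beta>. indicator {0..} t * (indicator {F2 z..N} \<beta> * indicator {\<beta>. ennreal t < G \<beta>} \<beta>) \<partial>lborel \<partial>lborel)"
    proof (rule nn_integral_cong)
      fix t :: real
      show "indicator {0..} t * ennreal (min (N - F1 t) (N - F2 z)) =
        (\<integral>\<^sup>+ \<beta>. indicator {0..} t * (indicator {F2 z..N} \<beta> * indicator {\<beta>. ennreal t < G \<beta>} \<beta>) \<partial>lborel)"
      proof (cases "0 \<le> t")
        case True
        have S: "{F2 z..N} \<inter> {\<beta>. ennreal t < G \<beta>} \<in> sets lborel"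
        proof -
          have "{\<beta>. ennreal t < G \<beta>} = {\<beta> \<in> space borel. ennreal t < qinv F1 \<beta>}" unfolding G_def by simp
          also have "\<dots> \<in> sets borel" by measurable
          finally show ?thesis by simp
        qed
        have "ennreal (min (N - F1 t) (N - F2 z)) = emeasure lborel ({F2 z..N} \<inter> {\<beta>. ennreal t < G \<beta>})"
          using lemA[OF fin True, of "N - F2 z" \<mu>] F20[of z] F2N[of z] unfolding N_def F1_def G_def by simp
        also have "\<dots> = (\<integral>\<^sup>+ \<beta>. indicator {F2 z..N} \<beta> * indicator {\<beta>. ennreal t < G \<beta>} \<beta> \<partial>lborel)"
          using S by (simp add: indicator_inter_arith[symmetric])
        finally show ?thesis using True by simp
      qed simp
    qed
    also have "\<dots> = (\<integral>\<^sup>+ \<beta>. \<integral>\<^sup>+ t. indicator {0..} t * (indicator {F2 z..N} \<beta> * indicator {\<beta>. ennreal t < G \<beta>} \<beta>) \<partial>lborel \<partial>lborel)"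
      using lborel_pair.Fubini'[OF m1[of "F2 z" N F1]] unfolding G_def by simp
    also have "\<dots> = (\<integral>\<^sup>+ \<beta>. indicator {F2 z..N} \<beta> * G \<beta> \<partial>lborel)"
    proof (rule nn_integral_cong)
      fix \<beta> :: real
      have "(\<integral>\<^sup>+ t. indicator {0..} t * (indicator {F2 z..N} \<beta> * indicator {\<beta>. ennreal t < G \<beta>} \<beta>) \<partial>lborel)
        = (\<integral>\<^sup>+ t. indicator {F2 z..N} \<beta> * indicator {t. 0 \<le> t \<and> ennreal t < G \<beta>} t \<partial>lborel)"
        by (intro nn_integral_cong) (auto simp: indicator_def)
      also have "\<dots> = indicator {F2 z..N} \<beta> * emeasure lborel {t. 0 \<le> t \<and> ennreal t < G \<beta>}"
        by (subst nn_integral_cmult) auto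
      also have "\<dots> = indicator {F2 z..N} \<beta> * G \<beta>" by (simp add: emeasure_lt_ennreal)
      finally show "(\<integral>\<^sup>+ t. indicator {0..} t * (indicator {F2 z..N} \<beta> * indicator {\<beta>. ennreal t < G \<beta>} \<beta>) \<partial>lborel)
        = indicator {F2 z..N} \<beta> * G \<beta>" .
    qed
    finally show ?thesis .
  qed
  have "v_fun \<nu> \<mu> f = (\<integral>\<^sup>+ z. indicator {0..} z * (\<integral>\<^sup>+ \<beta>. indicator {F2 z..N} \<beta> * G \<beta> \<partial>lborel) \<partial>lborel)"
    unfolding v_fun_def step1 ..
  also have "\<dots> = (\<integral>\<^sup>+ z. \<integral>\<^sup>+ \<beta>. indicator {0..} z * (indicator {F2 z..N} \<beta> * G \<beta>) \<partial>lborel \<partial>lborel)"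
    unfolding G_def by (intro nn_integral_cong, subst nn_integral_cmult) auto
  also have "\<dots> = (\<integral>\<^sup>+ \<beta>. \<integral>\<^sup>+ z. indicator {0..} z * (indicator {F2 z..N} \<beta> * G \<beta>) \<partial>lborel \<partial>lborel)"
    using lborel_pair.Fubini'[OF m2[OF F2m, of N F1]] unfolding G_def by simp
  also have "\<dots> = (\<integral>\<^sup>+ \<beta>. indicator {0..N} \<beta> * (G \<beta> * Q \<beta>) \<partial>lborel)"
  proof (rule nn_integral_cong)
    fix \<beta> :: real
    have Sm: "{z. 0 \<le> z \<and> F2 z \<le> \<beta>} \<in> sets lborel"
    proof -
      have "{z. 0 \<le> z \<and> F2 z \<le> \<beta>} = {z \<in> space borel. 0 \<le> z \<and> F2 z \<le> \<beta>}" by simp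
      also have "\<dots> \<in> sets borel" by measurable
      finally show ?thesis by simp
    qed
    have "(\<integral>\<^sup>+ z. indicator {0..} z * (indicator {F2 z..N} \<beta> * G \<beta>) \<partial>lborel)
      = (\<integral>\<^sup>+ z. (indicator {0..N} \<beta> * G \<beta>) * indicator {z. 0 \<le> z \<and> F2 z \<le> \<beta>} z \<partial>lborel)"
    proof (rule nn_integral_cong)
      fix z :: real
      show "indicator {0..} z * (indicator {F2 z..N} \<beta> * G \<beta>) =
        (indicator {0..N} \<beta> * G \<beta>) * indicator {z. 0 \<le> z \<and> F2 z \<le> \<beta>} z"
        using F20[of z] by (auto simp: indicator_def)
    qed
    also have "\<dots> = (indicator {0..N} \<beta> * G \<beta>) * emeasure lborel {z. 0 \<le> z \<and> F2 z \<le> \<beta>}"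
      using Sm by (subst nn_integral_cmult) auto
    also have "\<dots> = indicator {0..N} \<beta> * (G \<beta> * Q \<beta>)"
      unfolding Q_def qinv_measure[OF F2mono] by (simp add: mult.assoc)
    finally show "(\<integral>\<^sup>+ z. indicator {0..} z * (indicator {F2 z..N} \<beta> * G \<beta>) \<partial>lborel)
      = indicator {0..N} \<beta> * (G \<beta> * Q \<beta>)" .
  qed
  finally show ?thesis unfolding N_def G_def Q_def F1_def F2_def .
qed

end
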